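(* Let $K\ge1$, $g_1,\dots,g_K$ probability densities on $\mathbb{R}^d$ (finite at the data points), and $x_1,\dots,x_N\in\mathbb{R}^d$. Suppose $(\pi_1,\dots,\pi_K)$ is an optimal solution of $$\max_{\pi'}\ \sum_{n=1}^N\log\Big(\sum_{k=1}^K\pi'_k g_k(x_n)\Big)\quad\text{s.t.}\quad \pi'_1,\dots,\pi'_K\ge0,\ \sum_{k=1}^K\pi'_k=1,$$ and that $f=\sum_k\pi_kg_k$ satisfies $0<f(x_n)<\infty$ for all $n$. Then $$0\le \mathrm{MC}(\{\pi_k,g_k\}_{k=1}^K;\{x_n\}_{n=1}^N)\le\log K.$$
   Context: For mixture weights $\pi_k\ge 0$ summing to one, densities $g_k$, $f=\sum_k \pi_k g_k$, and data $x_1,\dots,x_N$ with $0<f(x_n)<\infty$ for all $n$, the mixture complexity is $$\mathrm{MC}(\{\pi_k,g_k\}_{k=1}^K;\{x_n\}_{n=1}^N)=\frac1N\sum_{n=1}^N\sum_{k=1}^K\frac{\pi_k g_k(x_n)}{f(x_n)}\log\frac{g_k(x_n)}{f(x_n)},$$ with the convention that a term with $\pi_k g_k(x_n)=0$ equals $0$. *)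

theory Defs
  imports "HOL-Analysis.Analysis"
begin

definition in_simplex :: "nat \<Rightarrow> (nat \<Rightarrow> real) \<Rightarrow> bool" where
  "in_simplex K p \<longleftrightarrow> (\<forall>k<K. p k \<ge> 0) \<and> (\<Sum>k<K. p k) = 1"

definition mixture :: "nat \<Rightarrow> (nat \<Rightarrow> real) \<Rightarrow> (nat \<Rightarrow> 'a \<Rightarrow> real) \<Rightarrow> 'a \<Rightarrow> real" where
  "mixture K p g x = (\<Sum>k<K. p k * g k x)"

definition prob_density :: "('a::euclidean_space \<Rightarrow> real) \<Rightarrow> bool" where
  "prob_density h \<longleftrightarrow> h \<in> borel_measurable lborel \<and> (\<forall>x. h x \<ge> 0)
     \<and> integrable lborel h \<and> integral\<^sup>L lborel h = 1"

definition loglik :: "nat \<Rightarrow> (nat \<Rightarrow> real) \<Rightarrow> (nat \<Rightarrow> 'a \<Rightarrow> real) \<Rightarrow> nat \<Rightarrow> (nat \<Rightarrow> 'a) \<Rightarrow> real" where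
  "loglik K p g N x = (\<Sum>n<N. ln (mixture K p g (x n)))"

(* mixture complexity, with the convention that a term with p_k g_k(x_n) = 0 is 0 *)
definition MC :: "nat \<Rightarrow> (nat \<Rightarrow> real) \<Rightarrow> (nat \<Rightarrow> 'a \<Rightarrow> real) \<Rightarrow> nat \<Rightarrow> (nat \<Rightarrow> 'a) \<Rightarrow> real" where
  "MC K p g N x = (1 / real N) * (\<Sum>n<N. \<Sum>k<K.
      (if p k * g k (x n) = 0 then 0
       else (p k * g k (x n) / mixture K p g (x n)) * ln (g k (x n) / mixture K p g (x n))))"

end

theory Submission
  imports Defs
begin

lemma kkt_aux:
  fixes K N :: nat and p :: "nat \<Rightarrow> real" and g :: "nat \<Rightarrow> 'a::euclidean_space \<Rightarrow> real"
    and x :: "nat \<Rightarrow> 'a"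
  assumes gnn: "\<And>k y. k < K \<Longrightarrow> g k y \<ge> 0"
    and simp: "in_simplex K p"
    and opt: "\<And>p'. in_simplex K p' \<Longrightarrow> (\<forall>n<N. mixture K p' g (x n) > 0) \<Longrightarrow>
               loglik K p' g N x \<le> loglik K p g N x"
    and fpos: "\<And>n. n < N \<Longrightarrow> mixture K p g (x n) > 0"
    and k: "k < K"
  shows "(\<Sum>n<N. g k (x n) / mixture K p g (x n)) \<le> real N"
proof -
  define f where "f n = mixture K p g (x n)" for n
  define a where "a n = g k (x n) / f n" for n
  have fp: "n < N \<Longrightarrow> f n > 0" for n using fpos f_def by auto
  have ann: "n < N \<Longrightarrow> a n \<ge> 0" for n using fp[of n] gnn[OF k] a_def by auto
  have bound: "(\<Sum>n<N. (a n - 1) / (1 + t * (a n - 1))) \<le> 0" if t: "0 < t" "t < 1" for t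
  proof -
    define p' where "p' j = (1-t) * p j + (if j = k then t else 0)" for j
    have s1: "(\<Sum>j<K. p j) = 1" "\<And>j. j < K \<Longrightarrow> p j \<ge> 0" using simp by (auto simp: in_simplex_def)
    have "in_simplex K p'"
      unfolding in_simplex_def p'_def using s1 t k
      by (auto simp: sum.distrib sum_distrib_left[symmetric] intro!: add_nonneg_nonneg)
    moreover have mix: "mixture K p' g (x n) = (1-t) * f n + t * g k (x n)" for n
    proof -
      have "(\<Sum>j<K. p' j * g j (x n)) = (\<Sum>j<K. (1-t) * (p j * g j (x n)) + (if j = k then t * g k (x n) else 0))"
        by (intro sum.cong refl) (auto simp: p'_def algebra_simps)
      also have "\<dots> = (\<Sum>j<K. (1-t) * (p j * g j (x n))) + (\<Sum>j<K. (if j = k then t * g k (x n) else 0))"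
        by (rule sum.distrib)
      also have "\<dots> = (1-t) * (\<Sum>j<K. p j * g j (x n)) + t * g k (x n)"
        using k by (simp add: sum_distrib_left)
      finally show ?thesis unfolding mixture_def f_def .
    qed
    moreover have pos: "n < N \<Longrightarrow> (1-t) * f n + t * g k (x n) > 0" for n
      using fp[of n] gnn[OF k, of "x n"] t by (simp add: add_pos_nonneg)
    ultimately have "loglik K p' g N x \<le> loglik K p g N x" using opt by auto
    hence le: "(\<Sum>n<N. ln ((1-t) * f n + t * g k (x n))) \<le> (\<Sum>n<N. ln (f n))"
      by (simp add: loglik_def mix f_def)
    have eq: "(1-t) * f n + t * g k (x n) = f n * (1 + t * (a n - 1))" if "n < N" for n
      using fp[OF that] by (simp add: a_def field_simps)
    have dpos: "n < N \<Longrightarrow> 1 + t * (a n - 1) > 0" for n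
      using pos eq fp by (metis zero_less_mult_pos)
    have "t * (a n - 1) / (1 + t * (a n - 1)) \<le> ln ((1-t) * f n + t * g k (x n)) - ln (f n)"
      if n: "n < N" for n
    proof -
      have "ln ((1-t) * f n + t * g k (x n)) - ln (f n) = ln (1 + t * (a n - 1))"
        using eq[OF n] fp[OF n] dpos[OF n] by (simp add: ln_mult)
      moreover have "ln (1 / (1 + t * (a n - 1))) \<le> 1 / (1 + t * (a n - 1)) - 1"
        using dpos[OF n] by (intro ln_le_minus_one) auto
      moreover have "ln (1 / (1 + t * (a n - 1))) = - ln (1 + t * (a n - 1))"
        using dpos[OF n] by (simp add: ln_div)
      moreover have "1 / (1 + t * (a n - 1)) - 1 = - (t * (a n - 1) / (1 + t * (a n - 1)))"
        using dpos[OF n] by (simp add: field_simps)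
      ultimately show ?thesis by linarith
    qed
    hence "(\<Sum>n<N. t * (a n - 1) / (1 + t * (a n - 1))) \<le> 0"
      using le sum_mono[of "{..<N}" "\<lambda>n. t * (a n - 1) / (1 + t * (a n - 1))"
          "\<lambda>n. ln ((1-t) * f n + t * g k (x n)) - ln (f n)"]
      by (simp add: sum_subtractf)
    hence "t * (\<Sum>n<N. (a n - 1) / (1 + t * (a n - 1))) \<le> 0"
      by (simp add: sum_distrib_left)
    thus ?thesis using t by (simp add: mult_le_0_iff)
  qed
  have lim: "((\<lambda>t. \<Sum>n<N. (a n - 1) / (1 + t * (a n - 1))) \<longlongrightarrow>
      (\<Sum>n<N. (a n - 1) / (1 + 0 * (a n - 1)))) (at_right 0)"
    by (intro tendsto_intros) auto
  have ev: "eventually (\<lambda>t. (\<Sum>n<N. (a n - 1) / (1 + t * (a n - 1))) \<le> 0) (at_right (0::real))"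
    unfolding eventually_at_right_field using bound by (intro exI[of _ 1]) auto
  have "(\<Sum>n<N. (a n - 1) / (1 + 0 * (a n - 1))) \<le> 0"
    using tendsto_upperbound[OF lim ev] by simp
  hence "(\<Sum>n<N. a n) - real N \<le> 0" by (simp add: sum_subtractf)
  thus ?thesis by (simp add: a_def f_def)
qed

theorem proposition3:
  fixes K N :: nat and p :: "nat \<Rightarrow> real" and g :: "nat \<Rightarrow> 'a::euclidean_space \<Rightarrow> real"
    and x :: "nat \<Rightarrow> 'a"
  assumes "K \<ge> 1"
    and "\<And>k. k < K \<Longrightarrow> prob_density (g k)"
    and "in_simplex K p"
    and opt: "\<And>p'. in_simplex K p' \<Longrightarrow> (\<forall>n<N. mixture K p' g (x n) > 0) \<Longrightarrow>
               loglik K p' g N x \<le> loglik K p g N x"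
    and "\<And>n. n < N \<Longrightarrow> mixture K p g (x n) > 0"
  shows "0 \<le> MC K p g N x \<and> MC K p g N x \<le> ln (real K)"
proof -
  have gnn: "\<And>k y. k < K \<Longrightarrow> g k y \<ge> 0" using assms(2) by (simp add: prob_density_def)
  have s1: "(\<Sum>j<K. p j) = 1" and pnn: "\<And>j. j < K \<Longrightarrow> p j \<ge> 0"
    using assms(3) by (auto simp: in_simplex_def)
  define f where "f n = mixture K p g (x n)" for n
  have fp: "n < N \<Longrightarrow> f n > 0" for n using assms(5) f_def by auto
  define A where "A k = (\<Sum>n<N. g k (x n) / f n)" for k
  have Ale: "k < K \<Longrightarrow> A k \<le> real N" for k
    using kkt_aux[OF gnn assms(3) opt assms(5)] unfolding A_def f_def by blast
  have "(\<Sum>k<K. p k * A k) = (\<Sum>n<N. (\<Sum>k<K. p k * g k (x n)) / f n)"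
    unfolding A_def by (simp add: sum_distrib_left sum_divide_distrib sum.swap[of _ "{..<K}"])
  also have "\<dots> = (\<Sum>n<N. 1)"
  proof (intro sum.cong refl)
    fix n assume "n \<in> {..<N}"
    hence "f n > 0" using fp by auto
    moreover have "(\<Sum>k<K. p k * g k (x n)) = f n" by (simp add: f_def mixture_def)
    ultimately show "(\<Sum>k<K. p k * g k (x n)) / f n = 1" by simp
  qed
  finally have sA: "(\<Sum>k<K. p k * A k) = real N" by simp
  have "(\<Sum>k<K. p k * (real N - A k)) = 0"
    using sA s1 by (simp add: right_diff_distrib sum_subtractf sum_distrib_right[symmetric])
  hence pA: "k < K \<Longrightarrow> p k * A k = real N * p k" for k
  proof -
    assume k: "k < K"
    have "\<forall>j\<in>{..<K}. p j * (real N - A j) = 0"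
      using sum_nonneg_eq_0_iff[of "{..<K}" "\<lambda>k. p k * (real N - A k)"] pnn Ale \<open>(\<Sum>k<K. p k * (real N - A k)) = 0\<close>
      by auto
    hence "p k * (real N - A k) = 0" using k by auto
    hence "p k * real N - p k * A k = 0" by (simp only: right_diff_distrib)
    thus ?thesis by (metis eq_iff_diff_eq_0 mult.commute)
  qed
  define r where "r n k = p k * g k (x n) / f n" for n k
  define T where "T n k = (if p k * g k (x n) = 0 then 0
       else (p k * g k (x n) / f n) * ln (g k (x n) / f n))" for n k
  have MCeq: "MC K p g N x = (1 / real N) * (\<Sum>n<N. \<Sum>k<K. T n k)"
    unfolding MC_def T_def f_def by simp
  have rsum: "n < N \<Longrightarrow> (\<Sum>k<K. r n k) = 1" for n
    using fp[of n] by (simp add: r_def sum_divide_distrib[symmetric] f_def mixture_def)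
  have low: "T n k \<ge> r n k - p k" if n: "n < N" and k: "k < K" for n k
  proof (cases "p k * g k (x n) = 0")
    case True
    hence "r n k = 0" by (simp add: r_def)
    thus ?thesis using True pnn[OF k] by (simp add: T_def)
  next
    case False
    hence pg: "p k > 0" "g k (x n) > 0" using pnn[OF k] gnn[OF k, of "x n"]
      by (auto simp: less_le)
    have "ln (f n / g k (x n)) \<le> f n / g k (x n) - 1"
      using fp[OF n] pg by (intro ln_le_minus_one) auto
    moreover have "ln (f n / g k (x n)) = - ln (g k (x n) / f n)"
      using fp[OF n] pg by (simp add: ln_div)
    ultimately have "1 - f n / g k (x n) \<le> ln (g k (x n) / f n)" by linarith
    hence "r n k * (1 - f n / g k (x n)) \<le> r n k * ln (g k (x n) / f n)"
      using fp[OF n] pg by (intro mult_left_mono) (auto simp: r_def)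
    moreover have "r n k * (1 - f n / g k (x n)) = r n k - p k"
      using fp[OF n] pg by (simp add: r_def field_simps)
    ultimately show ?thesis using False by (simp add: T_def r_def)
  qed
  have up: "T n k \<le> - r n k * ln (p k)" if n: "n < N" and k: "k < K" for n k
  proof (cases "p k * g k (x n) = 0")
    case True
    hence "r n k = 0" by (simp add: r_def)
    thus ?thesis using True by (simp add: T_def)
  next
    case False
    hence pg: "p k > 0" "g k (x n) > 0" using pnn[OF k] gnn[OF k, of "x n"]
      by (auto simp: less_le)
    have rp: "r n k > 0" using pg fp[OF n] by (simp add: r_def)
    have "p k * g k (x n) \<le> f n"
      unfolding f_def mixture_def
      using member_le_sum[of k "{..<K}" "\<lambda>j. p j * g j (x n)"] k pnn gnn by auto
    hence r1: "r n k \<le> 1" using fp[OF n] by (simp add: r_def)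
    have "g k (x n) / f n = r n k / p k" using pg fp[OF n] by (simp add: r_def)
    hence "ln (g k (x n) / f n) = ln (r n k) - ln (p k)" using rp pg by (simp add: ln_div)
    moreover have "ln (r n k) \<le> 0" using rp r1 by simp
    ultimately have "r n k * ln (g k (x n) / f n) \<le> r n k * (- ln (p k))"
      using rp by (intro mult_left_mono) auto
    thus ?thesis using False by (simp add: T_def r_def)
  qed
  have S0: "0 \<le> (\<Sum>n<N. \<Sum>k<K. T n k)"
  proof -
    have "(\<Sum>n<N. \<Sum>k<K. r n k - p k) \<le> (\<Sum>n<N. \<Sum>k<K. T n k)"
      using low by (intro sum_mono) auto
    moreover have "(\<Sum>n<N. \<Sum>k<K. r n k - p k) = 0"
      using rsum s1 by (simp add: sum_subtractf)
    ultimately show ?thesis by simp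
  qed
  have ent: "(\<Sum>k<K. - p k * ln (p k)) \<le> ln (real K)"
  proof -
    have Kp: "real K > 0" using assms(1) by simp
    have "- p k * ln (p k) - p k * ln (real K) \<le> 1 / real K - p k" if k: "k < K" for k
    proof (cases "p k = 0")
      case True thus ?thesis using Kp by simp
    next
      case False
      hence pk: "p k > 0" using pnn[OF k] by simp
      have "ln (1 / (real K * p k)) \<le> 1 / (real K * p k) - 1"
        using pk Kp by (intro ln_le_minus_one) auto
      moreover have "ln (1 / (real K * p k)) = - ln (p k) - ln (real K)"
        using pk Kp by (simp add: ln_div ln_mult)
      ultimately have "- ln (p k) - ln (real K) \<le> 1 / (real K * p k) - 1" by simp
      hence "p k * (- ln (p k) - ln (real K)) \<le> p k * (1 / (real K * p k) - 1)"
        using pk by (intro mult_left_mono) auto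
      moreover have "p k * (1 / (real K * p k) - 1) = 1 / real K - p k"
        using pk Kp by (simp add: field_simps)
      ultimately show ?thesis by (simp add: algebra_simps)
    qed
    hence "(\<Sum>k<K. - p k * ln (p k) - p k * ln (real K)) \<le> (\<Sum>k<K. 1 / real K - p k)"
      by (intro sum_mono) auto
    thus ?thesis using s1 Kp by (simp add: sum_subtractf sum_distrib_right[symmetric])
  qed
  have SU: "(\<Sum>n<N. \<Sum>k<K. T n k) \<le> real N * ln (real K)"
  proof -
    have "(\<Sum>n<N. \<Sum>k<K. T n k) \<le> (\<Sum>n<N. \<Sum>k<K. - r n k * ln (p k))"
      using up by (intro sum_mono) auto
    also have "\<dots> = (\<Sum>k<K. - ln (p k) * (p k * A k))"
      by (subst sum.swap) (simp add: A_def r_def sum_distrib_left sum_negf mult_ac)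
    also have "\<dots> = real N * (\<Sum>k<K. - p k * ln (p k))"
    proof -
      have "(\<Sum>k<K. - ln (p k) * (p k * A k)) = (\<Sum>k<K. real N * (- p k * ln (p k)))"
        by (intro sum.cong refl) (simp add: pA)
      thus ?thesis by (simp add: sum_distrib_left)
    qed
    also have "\<dots> \<le> real N * ln (real K)"
      using ent by (intro mult_left_mono) auto
    finally show ?thesis .
  qed
  show ?thesis
  proof (cases "N = 0")
    case True thus ?thesis using assms(1) by (simp add: MC_def)
  next
    case False
    thus ?thesis using S0 SU unfolding MCeq by (auto simp: field_simps)
  qed
qed

end
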